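(* Let $\mathbb{W}$ be a union of lines and ACM points in $\mathbb{P}^1\times\mathbb{P}^1$ and let $\tau$ be the tuple of the standard generating set $\mathcal{G}(I_{\mathbb{W}})$ listed in the standard order. Suppose $\mathcal{G}(I_{\mathbb{W}})=A\sqcup B$ is an $r$-cut partition with respect to $\tau$, and let $J=\langle A\rangle$, $K=\langle B\rangle$. Then $J\cap K$ is minimally generated by $r$ elements (for $r=0$, $J\cap K=0$).
   Context: $R=\mathbb{C}[x_0,x_1,y_0,y_1]$ is bigraded with $\deg x_i=(1,0)$, $\deg y_i=(0,1)$. For $A=[a_0:a_1]\in\mathbb{P}^1$ let $H_A=a_1x_0-a_0x_1$ and for $B=[b_0:b_1]$ let $V_B=b_1y_0-b_0y_1$; the same symbol denotes the form and its zero set (horizontal, resp. vertical, line or ruling). $I_{A\times B}=\langle H_A,V_B\rangle$, $I_{\mathbb{X}}=\bigcap_{P\in\mathbb{X}}I_P$, and a finite set $\mathbb{X}$ is ACM if $R/I_{\mathbb{X}}$ is Cohen–Macaulay. A union of lines and points is $\mathbb{W}=\{P_1,\dots,P_r,H_1,\dots,H_t,V_1,\dots,V_p\}$ (distinct points, horizontal lines and vertical lines, no point on any of the lines), $\mathbb{X}_{\mathbb{W}}=\{P_1,\dots,P_r\}$, $I_{\mathbb{W}}=\bigcap_iI_{P_i}\cap\bigcap_i\langle H_i\rangle\cap\bigcap_j\langle V_j\rangle$; it is a union of lines and ACM points if $\mathbb{X}_{\mathbb{W}}$ is ACM. For ACM $\mathbb{X}$ with $\pi_1(\mathbb{X})=\{A_1,\dots,A_h\}$,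 $\pi_2(\mathbb{X})=\{B_1,\dots,B_v\}$, labelled so that $\alpha_i=|\{P\in\mathbb{X}:P\in H_{A_i}\}|$ satisfies $\alpha_1\ge\cdots\ge\alpha_h$ and the counts on $V_{B_j}$ are nonincreasing, $I_{\mathbb{X}}$ is minimally generated by $\{H_{A_1}\cdots H_{A_h},\ V_{B_1}\cdots V_{B_v}\}\cup\{H_{A_1}\cdots H_{A_i}V_{B_1}\cdots V_{B_{\alpha_{i+1}}}:\alpha_{i+1}<\alpha_i\}$. The standard generating set of $I_{\mathbb{W}}$ is this set for $\mathbb{X}=\mathbb{X}_{\mathbb{W}}$, each element multiplied by $\Lambda=\prod_iH_i\prod_jV_j$ (just $\{\Lambda\}$ if $\mathbb{X}_{\mathbb{W}}=\emptyset$). The standard order lists these generators by the lexicographic order ($y_0>y_1>x_0>x_1$) of their leading terms, largest first; concretely: $\Lambda V_{B_1}\cdots V_{B_v}$ first, then $\Lambda H_{A_1}\cdots H_{A_i}V_{B_1}\cdots V_{B_{\alpha_{i+1}}}$ for the indices $i$ with $\alpha_{i+1}<\alpha_i$ in increasing order of $i$, and $\Lambda H_{A_1}\cdots H_{A_h}$ last. Given a tuple $\tau=(\tau_1,\dots,\tau_n)$ of distinct elements of a set $X$ and a partition $X=A\sqcup B$: it is a $0$-partition if $A$ or $B$ is empty; otherwise it is an $r$-cut partition with respect to $\tau$, where $r$ is the number of indices $i\in\{1,\dots,n-1\}$ such that exactly one of $\tau_i,\tau_{i+1}$ lies in $A$. A $1$-cut partition is one of the form $A=\{\tau_i:i\le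 j\}$, $B=\{\tau_i:i>j\}$ (or with $A$ and $B$ swapped) for some $1\le j<n$. *)

theory Defs
  imports Complex_Main "HOL-Library.Poly_Mapping" "HOL-Library.Extended_Nat"
begin

datatype var = X0 | X1 | Y0 | Y1

type_synonym R = "(var \<Rightarrow>\<^sub>0 nat) \<Rightarrow>\<^sub>0 complex"

definition Var :: "var \<Rightarrow> R" where
  "Var v = Poly_Mapping.single (Poly_Mapping.single v 1) 1"

definition Const :: "complex \<Rightarrow> R" where
  "Const c = Poly_Mapping.single 0 c"

text \<open>Points of P^1 are modelled as C \<union> {\<infinity>}: Some a = [1:a], None = [0:1].\<close>
type_synonym P1 = "complex option"

text \<open>H_A = a1 x0 - a0 x1 and V_B = b1 y0 - b0 y1.\<close>
fun Hform :: "P1 \<Rightarrow> R" where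
  "Hform (Some a) = Const a * Var X0 - Var X1"
| "Hform None = Var X0"

fun Vform :: "P1 \<Rightarrow> R" where
  "Vform (Some b) = Const b * Var Y0 - Var Y1"
| "Vform None = Var Y0"

definition ideal_of :: "R set \<Rightarrow> R set" where
  "ideal_of S = {x. \<exists>G f. finite G \<and> G \<subseteq> S \<and> x = (\<Sum>g\<in>G. f g * g)}"

definition is_ideal :: "R set \<Rightarrow> bool" where
  "is_ideal I \<longleftrightarrow> 0 \<in> I \<and> (\<forall>a\<in>I. \<forall>b\<in>I. a + b \<in> I) \<and> (\<forall>a\<in>I. \<forall>c. c * a \<in> I)"

definition is_prime_ideal :: "R set \<Rightarrow> bool" where
  "is_prime_ideal P \<longleftrightarrow> is_ideal P \<and> P \<noteq> UNIV \<and> (\<forall>a b. a * b \<in> P \<longrightarrow> a \<in> P \<or> b \<in> P)"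

definition min_gens :: "R set \<Rightarrow> nat" where
  "min_gens I = (LEAST n. \<exists>G. finite G \<and> card G = n \<and> ideal_of G = I)"

definition irrel :: "R set" where
  "irrel = ideal_of (Var ` UNIV)"

definition regular_seq :: "R set \<Rightarrow> R list \<Rightarrow> bool" where
  "regular_seq I fs \<longleftrightarrow> set fs \<subseteq> irrel
     \<and> ideal_of (I \<union> set fs) \<noteq> UNIV
     \<and> (\<forall>k < length fs. \<forall>g. fs ! k * g \<in> ideal_of (I \<union> set (take k fs))
                              \<longrightarrow> g \<in> ideal_of (I \<union> set (take k fs)))"

definition depth_m :: "R set \<Rightarrow> enat" where
  "depth_m I = Sup {enat (length fs) | fs. regular_seq I fs}"

definition krull_dim_quot :: "R set \<Rightarrow> enat" where
  "krull_dim_quot I = Sup {enat n | n. \<exists>P :: nat \<Rightarrow> R set.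
      (\<forall>i\<le>n. is_prime_ideal (P i) \<and> I \<subseteq> P i) \<and> (\<forall>i<n. P i \<subset> P (Suc i))}"

text \<open>R/I (I homogeneous) is Cohen--Macaulay iff depth w.r.t. the homogeneous maximal
  ideal equals the Krull dimension (graded criterion); the zero ring counts as CM.\<close>
definition CM_quot :: "R set \<Rightarrow> bool" where
  "CM_quot I \<longleftrightarrow> I = UNIV \<or> depth_m I = krull_dim_quot I"

definition I_pt :: "P1 \<times> P1 \<Rightarrow> R set" where
  "I_pt P = ideal_of {Hform (fst P), Vform (snd P)}"

definition I_X :: "(P1 \<times> P1) set \<Rightarrow> R set" where
  "I_X X = (\<Inter>P\<in>X. I_pt P)"

definition ACM :: "(P1 \<times> P1) set \<Rightarrow> bool" where
  "ACM X \<longleftrightarrow> finite X \<and> CM_quot (I_X X)"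

definition alpha :: "(P1 \<times> P1) set \<Rightarrow> P1 \<Rightarrow> nat" where
  "alpha X A = card {P\<in>X. fst P = A}"

definition beta :: "(P1 \<times> P1) set \<Rightarrow> P1 \<Rightarrow> nat" where
  "beta X B = card {P\<in>X. snd P = B}"

definition good_labelling :: "(P1 \<times> P1) set \<Rightarrow> P1 list \<Rightarrow> P1 list \<Rightarrow> bool" where
  "good_labelling X As Bs \<longleftrightarrow>
     distinct As \<and> set As = fst ` X \<and> sorted_wrt (\<lambda>a b. alpha X a \<ge> alpha X b) As \<and>
     distinct Bs \<and> set Bs = snd ` X \<and> sorted_wrt (\<lambda>a b. beta X a \<ge> beta X b) Bs"

text \<open>W = (points, horizontal lines H_A for A in Hs, vertical lines V_B for B in Vs).\<close>
definition union_lines_points :: "(P1 \<times> P1) set \<Rightarrow> P1 set \<Rightarrow> P1 set \<Rightarrow> bool" where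
  "union_lines_points X Hs Vs \<longleftrightarrow> finite X \<and> finite Hs \<and> finite Vs \<and>
     (\<forall>P\<in>X. fst P \<notin> Hs \<and> snd P \<notin> Vs)"

definition Lambda :: "P1 set \<Rightarrow> P1 set \<Rightarrow> R" where
  "Lambda Hs Vs = (\<Prod>A\<in>Hs. Hform A) * (\<Prod>B\<in>Vs. Vform B)"

text \<open>The standard generating set of I_W listed in the standard order (0-based
  indices: generator for i in 1..h-1 with alpha(A_{i+1}) < alpha(A_i) in 1-based terms).\<close>
definition std_gens :: "(P1 \<times> P1) set \<Rightarrow> P1 set \<Rightarrow> P1 set \<Rightarrow> P1 list \<Rightarrow> P1 list \<Rightarrow> R list" where
  "std_gens X Hs Vs As Bs =
    (let L = Lambda Hs Vs in
     if X = {} then [L]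
     else [L * prod_list (map Vform Bs)]
        @ map (\<lambda>i. L * prod_list (map Hform (take i As))
                      * prod_list (map Vform (take (alpha X (As ! i)) Bs)))
              (filter (\<lambda>i. alpha X (As ! i) < alpha X (As ! (i - 1))) [1..<length As])
        @ [L * prod_list (map Hform As)])"

definition cuts :: "R list \<Rightarrow> R set \<Rightarrow> nat" where
  "cuts tau A = card {i. Suc i < length tau \<and> ((tau ! i \<in> A) \<noteq> (tau ! Suc i \<in> A))}"

end

theory Submission
  imports Defs
begin

fun var_rank :: "var \<Rightarrow> nat" where
  "var_rank X0 = 0" | "var_rank X1 = 1" | "var_rank Y0 = 2" | "var_rank Y1 = 3"

lemma var_rank_inj: "var_rank a = var_rank b \<Longrightarrow> a = b"
  by (cases a; cases b; simp)

instantiation var :: linorder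
begin
definition "less_eq_var a b \<longleftrightarrow> var_rank a \<le> var_rank b"
definition "less_var a b \<longleftrightarrow> var_rank a < var_rank b"
instance by standard (auto simp: less_eq_var_def less_var_def intro: var_rank_inj)
end

lemma is_idealD:
  assumes "is_ideal I"
  shows "0 \<in> I" "a \<in> I \<Longrightarrow> b \<in> I \<Longrightarrow> a + b \<in> I" "a \<in> I \<Longrightarrow> c * a \<in> I"
  using assms unfolding is_ideal_def by auto

lemma is_ideal_diff: "is_ideal I \<Longrightarrow> a \<in> I \<Longrightarrow> b \<in> I \<Longrightarrow> a - b \<in> I"
proof -
  assume I: "is_ideal I" "a \<in> I" "b \<in> I"
  have "(-1) * b \<in> I" using I is_idealD(3) by blast
  then have "a + (-1) * b \<in> I" using I is_idealD(2) by blast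
  then show ?thesis by simp
qed

lemma is_ideal_sum: "is_ideal I \<Longrightarrow> (\<And>x. x \<in> G \<Longrightarrow> h x \<in> I) \<Longrightarrow> sum h G \<in> I"
proof (induction G rule: infinite_finite_induct)
  case (infinite A) then show ?case by (simp add: is_idealD(1))
next
  case empty then show ?case by (simp add: is_idealD(1))
next
  case (insert x F) then show ?case by (simp add: is_idealD(2))
qed

lemma aux_if_distrib: "((if x \<in> G1 then f1 x else 0) + (if x \<in> G2 then f2 x else 0::R)) * x = (if x \<in> G1 then f1 x * x else 0) + (if x \<in> G2 then f2 x*x else 0)"
  by (simp add: distrib_right)

lemma is_ideal_ideal_of: "is_ideal (ideal_of S)"
  unfolding is_ideal_def
proof (intro conjI ballI allI)
  show "0 \<in> ideal_of S" unfolding ideal_of_def by (rule CollectI, rule exI[of _ "{}"]) simp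
next
  fix a b assume a: "a \<in> ideal_of S" and b: "b \<in> ideal_of S"
  obtain G1 f1 where g1: "finite G1" "G1 \<subseteq> S" "a = (\<Sum>g\<in>G1. f1 g * g)" using a unfolding ideal_of_def by blast
  obtain G2 f2 where g2: "finite G2" "G2 \<subseteq> S" "b = (\<Sum>g\<in>G2. f2 g * g)" using b unfolding ideal_of_def by blast
  define f where "f g = (if g \<in> G1 then f1 g else 0) + (if g \<in> G2 then f2 g else 0)" for g
  have "(\<Sum>g\<in>G1 \<union> G2. f g * g) = (\<Sum>g\<in>G1 \<union> G2. (if g \<in> G1 then f1 g * g else 0)) + (\<Sum>g\<in>G1 \<union> G2. (if g \<in> G2 then f2 g * g else 0))"
    unfolding f_def sum.distrib[symmetric] by (intro sum.cong refl) (rule aux_if_distrib)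
  also have "\<dots> = a + b"
    using g1 g2 by (simp add: sum.If_cases Int_absorb1)
  finally have eq: "a + b = (\<Sum>g\<in>G1 \<union> G2. f g * g)" by simp
  have "finite (G1 \<union> G2)" "G1 \<union> G2 \<subseteq> S" using g1(1,2) g2(1,2) by auto
  then show "a + b \<in> ideal_of S" unfolding ideal_of_def
    by (intro CollectI exI[of _ "G1 \<union> G2"] exI[of _ f]) (simp only: eq simp_thms)
next
  fix a c assume a: "a \<in> ideal_of S"
  obtain G1 f1 where g1: "finite G1" "G1 \<subseteq> S" "a = (\<Sum>g\<in>G1. f1 g * g)" using a unfolding ideal_of_def by blast
  have eq: "c * a = (\<Sum>g\<in>G1. (c * f1 g) * g)" unfolding g1(3) sum_distrib_left by (simp only: mult.assoc)
  show "c * a \<in> ideal_of S" unfolding ideal_of_def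
    by (rule CollectI, rule exI[of _ G1], rule exI[of _ "\<lambda>g. c * f1 g"]) (simp only: eq g1(1,2) simp_thms)
qed

lemma subset_ideal_of: "S \<subseteq> ideal_of S"
proof
  fix x assume "x \<in> S"
  then show "x \<in> ideal_of S" unfolding ideal_of_def
    by (intro CollectI exI[of _ "{x}"] exI[of _ "\<lambda>_. 1"]) simp
qed

lemma ideal_of_least: "is_ideal I \<Longrightarrow> S \<subseteq> I \<Longrightarrow> ideal_of S \<subseteq> I"
proof
  fix x assume I: "is_ideal I" "S \<subseteq> I" and x: "x \<in> ideal_of S"
  obtain G f where g: "finite G" "G \<subseteq> S" "x = (\<Sum>g\<in>G. f g * g)" using x unfolding ideal_of_def by blast
  show "x \<in> I" unfolding g(3) using g I by (intro is_ideal_sum) (auto intro: is_idealD(3))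
qed

lemma ideal_of_mono: "S \<subseteq> T \<Longrightarrow> ideal_of S \<subseteq> ideal_of T"
  by (meson ideal_of_least is_ideal_ideal_of order_trans subset_ideal_of)

lemmas ideal_of_add = is_idealD(2)[OF is_ideal_ideal_of]
lemmas ideal_of_mult = is_idealD(3)[OF is_ideal_ideal_of]
lemmas ideal_of_zero = is_idealD(1)[OF is_ideal_ideal_of]
lemmas ideal_of_diff = is_ideal_diff[OF is_ideal_ideal_of]

lemma ideal_of_empty: "ideal_of {} = {0}"
  unfolding ideal_of_def by auto

lemma is_ideal_dvd: "is_ideal {y. d dvd y}"
  unfolding is_ideal_def by auto

lemma ideal_of_dvd: "(\<And>x. x \<in> S \<Longrightarrow> d dvd x) \<Longrightarrow> y \<in> ideal_of S \<Longrightarrow> d dvd y"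
  using ideal_of_least[OF is_ideal_dvd, of S d] by auto

lemma ideal_of_insert_D:
  assumes "y \<in> ideal_of (insert x S)"
  shows "\<exists>c z. z \<in> ideal_of S \<and> y = c * x + z"
proof -
  let ?I = "{y. \<exists>c z. z \<in> ideal_of S \<and> y = c * x + z}"
  have "is_ideal ?I" unfolding is_ideal_def
  proof (intro conjI ballI allI)
    have "(0::R) = 0 * x + 0" by simp
    then show "0 \<in> ?I" using ideal_of_zero[of S] by blast
  next
    fix a b assume "a \<in> ?I" "b \<in> ?I"
    then obtain c1 z1 c2 z2 where "z1 \<in> ideal_of S" "a = c1 * x + z1" "z2 \<in> ideal_of S" "b = c2 * x + z2" by blast
    then have "z1 + z2 \<in> ideal_of S" "a + b = (c1 + c2) * x + (z1 + z2)" by (simp_all add: ideal_of_add algebra_simps)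
    then show "a + b \<in> ?I" by blast
  next
    fix a c assume "a \<in> ?I"
    then obtain c1 z1 where "z1 \<in> ideal_of S" "a = c1 * x + z1" by blast
    then have "c * z1 \<in> ideal_of S" "c * a = (c * c1) * x + (c * z1)" by (simp_all add: ideal_of_mult algebra_simps)
    then show "c * a \<in> ?I" by blast
  qed
  moreover have "insert x S \<subseteq> ?I"
  proof
    fix w assume "w \<in> insert x S"
    then show "w \<in> ?I"
    proof
      assume "w = x" then have "w = 1 * x + 0" by simp
      then show ?thesis using ideal_of_zero[of S] by blast
    next
      assume "w \<in> S" then have "w \<in> ideal_of S" "w = 0 * x + w" using subset_ideal_of[of S] by auto
      then show ?thesis by blast
    qed
  qed
  ultimately have "ideal_of (insert x S) \<subseteq> ?I" by (rule ideal_of_least)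
  then have "y \<in> ?I" using assms by (rule subsetD)
  then show ?thesis by (rule CollectD)
qed

definition stair_cuts :: "nat set \<Rightarrow> nat \<Rightarrow> nat \<Rightarrow> nat set" where
  "stair_cuts S s n = {i. s \<le> i \<and> Suc i < n \<and> (i \<in> S \<longleftrightarrow> Suc i \<notin> S)}"

lemma is_ideal_Int: "is_ideal I \<Longrightarrow> is_ideal J \<Longrightarrow> is_ideal (I \<inter> J)"
  unfolding is_ideal_def by auto

lemma stair_sup:
  assumes pd: "\<And>i j. i \<le> j \<Longrightarrow> j < n \<Longrightarrow> p i dvd p j"
    and qd: "\<And>i j. i \<le> j \<Longrightarrow> j < n \<Longrightarrow> q j dvd q i"
    and e_def: "\<And>k. e k = c * p k * q k"
    and m_def: "\<And>i. m i = c * p (Suc i) * q i"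
    and S: "S \<subseteq> {s..<n}"
  shows "ideal_of (m ` stair_cuts S s n) \<subseteq> ideal_of (e ` S) \<inter> ideal_of (e ` ({s..<n} - S))"
proof (rule ideal_of_least[OF is_ideal_Int[OF is_ideal_ideal_of is_ideal_ideal_of]])
  show "m ` stair_cuts S s n \<subseteq> ideal_of (e ` S) \<inter> ideal_of (e ` ({s..<n} - S))"
  proof
    fix y assume "y \<in> m ` stair_cuts S s n"
    then obtain i where i: "i \<in> stair_cuts S s n" "y = m i" by blast
    have i2: "s \<le> i" "Suc i < n" "i \<in> S \<longleftrightarrow> Suc i \<notin> S" using i(1) unfolding stair_cuts_def by auto
    obtain k1 where k1: "p (Suc i) = p i * k1" using pd[of i "Suc i"] i2 by (auto elim: dvdE)
    obtain k2 where k2: "q i = q (Suc i) * k2" using qd[of i "Suc i"] i2 by (auto elim: dvdE)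
    have y1: "y = k1 * e i" unfolding i(2) m_def e_def k1 by (simp add: ac_simps)
    have y2: "y = k2 * e (Suc i)" unfolding i(2) m_def e_def k2 by (simp add: ac_simps)
    have in1: "e i \<in> ideal_of (e ` S)" if "i \<in> S" for i
      by (rule subsetD[OF subset_ideal_of], rule imageI, rule that)
    have in2: "e i \<in> ideal_of (e ` ({s..<n} - S))" if "i \<in> {s..<n} - S" for i
      by (rule subsetD[OF subset_ideal_of], rule imageI, rule that)
    show "y \<in> ideal_of (e ` S) \<inter> ideal_of (e ` ({s..<n} - S))"
    proof (cases "i \<in> S")
      case True
      then have "Suc i \<in> {s..<n} - S" using i2 by auto
      have "y \<in> ideal_of (e ` S)" unfolding y1 by (rule ideal_of_mult, rule in1, rule True)
      moreover have "y \<in> ideal_of (e ` ({s..<n} - S))" unfolding y2 by (rule ideal_of_mult, rule in2, fact)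
      ultimately show ?thesis by blast
    next
      case False
      then have "Suc i \<in> S" "i \<in> {s..<n} - S" using i2 by auto
      have "y \<in> ideal_of (e ` S)" unfolding y2 by (rule ideal_of_mult, rule in1, fact)
      moreover have "y \<in> ideal_of (e ` ({s..<n} - S))" unfolding y1 by (rule ideal_of_mult, rule in2, fact)
      ultimately show ?thesis by blast
    qed
  qed
qed

context
  fixes n :: nat and p q e m :: "nat \<Rightarrow> R" and c :: R
  assumes pd: "\<And>i j. i \<le> j \<Longrightarrow> j < n \<Longrightarrow> p i dvd p j"
    and qd: "\<And>i j. i \<le> j \<Longrightarrow> j < n \<Longrightarrow> q j dvd q i"
    and cop: "\<And>i j g. i < n \<Longrightarrow> j < n \<Longrightarrow> p i dvd q j * g \<Longrightarrow> p i dvd g"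
    and c0: "c \<noteq> 0"
    and e_def: "\<And>k. e k = c * p k * q k"
    and m_def: "\<And>i. m i = c * p (Suc i) * q i"
begin

lemma stair_half:
  assumes IH: "\<And>S'. S' \<subseteq> {Suc s..<n} \<Longrightarrow>
       ideal_of (e ` S') \<inter> ideal_of (e ` ({Suc s..<n} - S')) \<subseteq> ideal_of (m ` stair_cuts S' (Suc s) n)"
    and S: "S \<subseteq> {s..<n}" and sS: "s \<in> S" and sn: "Suc s < n"
  shows "ideal_of (e ` S) \<inter> ideal_of (e ` ({s..<n} - S)) \<subseteq> ideal_of (m ` stair_cuts S s n)"
proof
  fix f assume f: "f \<in> ideal_of (e ` S) \<inter> ideal_of (e ` ({s..<n} - S))"
  define T where "T = {s..<n} - S"
  define S' where "S' = S - {s}"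
  have S'sub: "S' \<subseteq> {Suc s..<n}" using S unfolding S'_def by auto
  have TS': "{Suc s..<n} - S' = T" unfolding T_def S'_def using sS S by (auto simp: Suc_le_eq order_le_less)
  have cutsub: "stair_cuts S' (Suc s) n \<subseteq> stair_cuts S s n"
    unfolding stair_cuts_def S'_def by auto
  have cutmono: "ideal_of (m ` stair_cuts S' (Suc s) n) \<subseteq> ideal_of (m ` stair_cuts S s n)"
    using cutsub by (intro ideal_of_mono image_mono)
  have eS: "e ` S = insert (e s) (e ` S')" unfolding S'_def using sS by auto
  obtain c1 j where j: "j \<in> ideal_of (e ` S')" "f = c1 * e s + j"
    using f ideal_of_insert_D[of f "e s" "e ` S'"] unfolding eS by auto
  have dk: "c * p (Suc s) dvd e k" if "Suc s \<le> k" "k < n" for k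
    unfolding e_def using pd[OF that] by (simp add: mult.assoc mult_dvd_mono)
  have dT: "c * p (Suc s) dvd f"
  proof (rule ideal_of_dvd[of "e ` T"])
    fix x assume "x \<in> e ` T" then obtain k where k: "k \<in> T" "x = e k" by blast
    then have "Suc s \<le> k" "k < n" using sS unfolding T_def by (auto simp: Suc_le_eq order_le_less)
    then show "c * p (Suc s) dvd x" using dk k(2) by simp
  next
    show "f \<in> ideal_of (e ` T)" using f unfolding T_def by blast
  qed
  have dS': "c * p (Suc s) dvd j"
  proof (rule ideal_of_dvd[of "e ` S'"])
    fix x assume "x \<in> e ` S'" then obtain k where k: "k \<in> S'" "x = e k" by blast
    then have "Suc s \<le> k" "k < n" using S'sub by auto
    then show "c * p (Suc s) dvd x" using dk k(2) by simp
  next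
    show "j \<in> ideal_of (e ` S')" by (rule j(1))
  qed
  have "c * p (Suc s) dvd c1 * e s"
    using dT dS' j(2) by (metis add_diff_cancel_right' dvd_diff)
  then obtain t where t: "c1 * e s = c * p (Suc s) * t" by (auto elim: dvdE)
  have "c * (p (Suc s) * t) = c1 * e s" using t by (simp only: mult.assoc)
  also have "\<dots> = c * (q s * (c1 * p s))" unfolding e_def by (simp only: ac_simps)
  finally have "c * (p (Suc s) * t) = c * (q s * (c1 * p s))" .
  then have "p (Suc s) * t = q s * (c1 * p s)" using c0 by simp
  then have "p (Suc s) dvd q s * (c1 * p s)" by (metis dvd_triv_left)
  moreover have "s < n" using sn by simp
  ultimately have "p (Suc s) dvd c1 * p s" using cop[OF sn, of s "c1 * p s"] by blast
  then obtain t' where t': "c1 * p s = p (Suc s) * t'" by (auto elim: dvdE)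
  have "c1 * e s = c * q s * (c1 * p s)" unfolding e_def by (simp only: ac_simps)
  also have "\<dots> = t' * m s" unfolding t' m_def by (simp only: ac_simps)
  finally have ce: "c1 * e s = t' * m s" .
  obtain k2 where k2: "q s = q (Suc s) * k2" using qd[of s "Suc s"] sn by (auto elim: dvdE)
  have ms: "m s = k2 * e (Suc s)" unfolding m_def e_def k2 by (simp add: ac_simps)
  show "f \<in> ideal_of (m ` stair_cuts S s n)"
  proof (cases "Suc s \<in> S")
    case True
    then have "Suc s \<in> S'" unfolding S'_def by auto
    then have "m s \<in> ideal_of (e ` S')" unfolding ms using subset_ideal_of ideal_of_mult by blast
    then have "c1 * e s \<in> ideal_of (e ` S')" unfolding ce by (rule ideal_of_mult)
    then have "f \<in> ideal_of (e ` S')" using j by (simp add: ideal_of_add)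
    moreover have "f \<in> ideal_of (e ` ({Suc s..<n} - S'))" using f unfolding TS' T_def by auto
    ultimately show ?thesis using IH[OF S'sub] cutmono by auto
  next
    case False
    then have sc: "s \<in> stair_cuts S s n" using sS sn unfolding stair_cuts_def by auto
    have "Suc s \<in> T" using False sn unfolding T_def by auto
    then have "m s \<in> ideal_of (e ` T)" unfolding ms using subset_ideal_of ideal_of_mult by blast
    then have "c1 * e s \<in> ideal_of (e ` T)" unfolding ce by (rule ideal_of_mult)
    then have "j \<in> ideal_of (e ` T)" using f j(2) unfolding T_def
      by (metis IntD2 add_diff_cancel_left' ideal_of_diff)
    then have "j \<in> ideal_of (m ` stair_cuts S s n)" using j(1) IH[OF S'sub] cutmono unfolding TS' by auto
    moreover have "c1 * e s \<in> ideal_of (m ` stair_cuts S s n)"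
      unfolding ce using sc subset_ideal_of ideal_of_mult by blast
    ultimately show ?thesis using j(2) by (simp add: ideal_of_add)
  qed
qed

lemma stair_sub:
  shows "S \<subseteq> {s..<n} \<Longrightarrow> ideal_of (e ` S) \<inter> ideal_of (e ` ({s..<n} - S)) \<subseteq> ideal_of (m ` stair_cuts S s n)"
proof (induction "n - s" arbitrary: s S rule: less_induct)
  case less
  show ?case
  proof (cases "Suc s < n")
    case False
    then have sub: "{s..<n} \<subseteq> {s}" by auto
    then have "S = {} \<or> {s..<n} - S = {}" using less.prems by blast
    then have "ideal_of (e ` S) = {0} \<or> ideal_of (e ` ({s..<n} - S)) = {0}"
    proof (elim disjE)
      assume h: "S = {}" show ?thesis by (rule disjI1) (simp only: h image_empty ideal_of_empty)
    next
      assume h: "{s..<n} - S = {}" show ?thesis by (rule disjI2) (simp only: h image_empty ideal_of_empty)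
    qed
    then have "ideal_of (e ` S) \<inter> ideal_of (e ` ({s..<n} - S)) = {0}"
      using ideal_of_zero by auto
    then show ?thesis using ideal_of_zero by auto
  next
    case True
    have IH: "\<And>S'. S' \<subseteq> {Suc s..<n} \<Longrightarrow>
       ideal_of (e ` S') \<inter> ideal_of (e ` ({Suc s..<n} - S')) \<subseteq> ideal_of (m ` stair_cuts S' (Suc s) n)"
      using less.hyps True by auto
    show ?thesis
    proof (cases "s \<in> S")
      case True
      then show ?thesis using stair_half[OF IH less.prems True] \<open>Suc s < n\<close> by auto
    next
      case False
      define T where "T = {s..<n} - S"
      have T: "T \<subseteq> {s..<n}" "s \<in> T" using False \<open>Suc s < n\<close> unfolding T_def by auto
      have ST: "{s..<n} - T = S" using less.prems unfolding T_def by auto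
      have cT: "stair_cuts T s n = stair_cuts S s n"
        unfolding stair_cuts_def T_def using less.prems by auto
      have "ideal_of (e ` T) \<inter> ideal_of (e ` ({s..<n} - T)) \<subseteq> ideal_of (m ` stair_cuts T s n)"
        using stair_half[OF IH T(1) T(2)] \<open>Suc s < n\<close> by auto
      then have h2: "ideal_of (e ` T) \<inter> ideal_of (e ` S) \<subseteq> ideal_of (m ` stair_cuts S s n)"
        by (simp only: ST cT)
      show ?thesis using h2 unfolding T_def by blast
    qed
  qed
qed

end

lemma Const_mult: "Const (a * b) = Const a * Const b"
  unfolding Const_def by (simp add: mult_single)

lemma Const_one: "Const 1 = 1"
  unfolding Const_def by simp

lemma Const_add: "Const (a + b) = Const a + Const b"
  unfolding Const_def by (simp add: single_add)

lemma Const_zero: "Const 0 = 0"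
  unfolding Const_def by simp

lemma poly_expand: "(f::R) = (\<Sum>\<mu>\<in>Poly_Mapping.keys f. Poly_Mapping.single \<mu> (Poly_Mapping.lookup f \<mu>))"
proof (rule poly_mapping_eqI)
  fix k
  have "Poly_Mapping.lookup (\<Sum>\<mu>\<in>Poly_Mapping.keys f. Poly_Mapping.single \<mu> (Poly_Mapping.lookup f \<mu>)) k = (\<Sum>\<mu>\<in>Poly_Mapping.keys f. (Poly_Mapping.lookup f \<mu> when \<mu> = k))"
    by (simp add: lookup_sum lookup_single)
  also have "\<dots> = Poly_Mapping.lookup f k"
  proof (cases "k \<in> Poly_Mapping.keys f")
    case True
    then have "(\<Sum>\<mu>\<in>Poly_Mapping.keys f. (Poly_Mapping.lookup f \<mu> when \<mu> = k)) = (\<Sum>\<mu>\<in>Poly_Mapping.keys f. if \<mu> = k then Poly_Mapping.lookup f k else 0)"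
      by (intro sum.cong) (auto simp: when_def)
    then show ?thesis using True by simp
  next
    case False
    then have "(\<Sum>\<mu>\<in>Poly_Mapping.keys f. (Poly_Mapping.lookup f \<mu> when \<mu> = k)) = (\<Sum>\<mu>\<in>Poly_Mapping.keys f. 0)"
      by (intro sum.cong) (auto simp: when_def)
    then show ?thesis using False by (simp add: in_keys_iff)
  qed
  finally show "Poly_Mapping.lookup f k = Poly_Mapping.lookup (\<Sum>\<mu>\<in>Poly_Mapping.keys f. Poly_Mapping.single \<mu> (Poly_Mapping.lookup f \<mu>)) k" by simp
qed

lemma poly_induct:
  assumes "\<And>\<mu> c. P (Poly_Mapping.single \<mu> c)" "P 0" "\<And>f g. P f \<Longrightarrow> P g \<Longrightarrow> P (f + g)"
  shows "P (f::R)"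
proof -
  have "P (\<Sum>\<mu>\<in>A. Poly_Mapping.single \<mu> (Poly_Mapping.lookup f \<mu>))" for A
    by (induction A rule: infinite_finite_induct) (auto intro: assms)
  then show ?thesis by (subst poly_expand) 
qed

definition mdeg :: "(var \<Rightarrow>\<^sub>0 nat) \<Rightarrow> nat" where
  "mdeg \<mu> = Poly_Mapping.lookup \<mu> X0 + Poly_Mapping.lookup \<mu> X1 + Poly_Mapping.lookup \<mu> Y0 + Poly_Mapping.lookup \<mu> Y1"

lemma mdeg_zero: "mdeg \<mu> = 0 \<Longrightarrow> \<mu> = 0"
  unfolding mdeg_def by (intro poly_mapping_eqI) (case_tac k; simp)

lemma mono_split:
  fixes \<mu> :: "var \<Rightarrow>\<^sub>0 nat"
  assumes "Poly_Mapping.lookup \<mu> v > 0"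
  shows "\<mu> = Poly_Mapping.single v 1 + (\<mu> - Poly_Mapping.single v 1)"
  using assms by (intro poly_mapping_eqI) (auto simp: lookup_add lookup_minus lookup_single when_def; arith)

lemma mdeg_split:
  fixes \<mu> :: "var \<Rightarrow>\<^sub>0 nat"
  assumes "Poly_Mapping.lookup \<mu> v > 0"
  shows "mdeg (\<mu> - Poly_Mapping.single v 1) < mdeg \<mu>"
  using assms unfolding mdeg_def by (cases v) (simp_all add: lookup_minus lookup_single when_def)

lemma mono_induct:
  assumes "\<And>c. P (Poly_Mapping.single 0 c)"
    and "\<And>\<mu> v c. P (Poly_Mapping.single \<mu> c) \<Longrightarrow> P (Poly_Mapping.single (Poly_Mapping.single v 1 + \<mu>) c)"
  shows "P (Poly_Mapping.single \<mu> c :: R)"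
proof (induction "mdeg \<mu>" arbitrary: \<mu> rule: less_induct)
  case less
  show ?case
  proof (cases "mdeg \<mu> = 0")
    case True
    then show ?thesis using mdeg_zero assms(1) by metis
  next
    case False
    then obtain v where v: "Poly_Mapping.lookup \<mu> v > 0" unfolding mdeg_def by (metis add_is_0 gr0I)
    have "P (Poly_Mapping.single (\<mu> - Poly_Mapping.single v 1) c)" using less mdeg_split[OF v] by blast
    then have "P (Poly_Mapping.single (Poly_Mapping.single v 1 + (\<mu> - Poly_Mapping.single v 1)) c)" by (rule assms(2))
    then show ?thesis using mono_split[OF v] by simp
  qed
qed

lemma Var_mult_single: "Var v * Poly_Mapping.single \<mu> c = Poly_Mapping.single (Poly_Mapping.single v 1 + \<mu>) c"
  unfolding Var_def by (simp add: mult_single)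

lemma single_mult_lookup:
  "Poly_Mapping.lookup (Poly_Mapping.single m a * (f::R)) (m + k) = a * Poly_Mapping.lookup f k"
proof -
  have "Poly_Mapping.single m a * f = (\<Sum>\<mu>\<in>Poly_Mapping.keys f. Poly_Mapping.single (m + \<mu>) (a * Poly_Mapping.lookup f \<mu>))"
    by (subst poly_expand[of f]) (simp add: sum_distrib_left mult_single)
  then have "Poly_Mapping.lookup (Poly_Mapping.single m a * f) (m + k) = (\<Sum>\<mu>\<in>Poly_Mapping.keys f. (a * Poly_Mapping.lookup f \<mu> when m + \<mu> = m + k))"
    by (simp add: lookup_sum lookup_single)
  also have "\<dots> = (\<Sum>\<mu>\<in>Poly_Mapping.keys f. if \<mu> = k then a * Poly_Mapping.lookup f k else 0)"
    by (intro sum.cong) (auto simp: when_def)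
  also have "\<dots> = a * Poly_Mapping.lookup f k" by (simp add: in_keys_iff)
  finally show ?thesis .
qed

lemma single_mult_lookup0:
  assumes "\<And>k'. k \<noteq> m + k'"
  shows "Poly_Mapping.lookup (Poly_Mapping.single m a * (f::R)) k = 0"
proof -
  have "Poly_Mapping.single m a * f = (\<Sum>\<mu>\<in>Poly_Mapping.keys f. Poly_Mapping.single (m + \<mu>) (a * Poly_Mapping.lookup f \<mu>))"
    by (subst poly_expand[of f]) (simp add: sum_distrib_left mult_single)
  then have "Poly_Mapping.lookup (Poly_Mapping.single m a * f) k = (\<Sum>\<mu>\<in>Poly_Mapping.keys f. (a * Poly_Mapping.lookup f \<mu> when m + \<mu> = k))"
    by (simp add: lookup_sum lookup_single)
  also have "\<dots> = 0" using assms by (intro sum.neutral) (auto simp: when_def)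
  finally show ?thesis .
qed

definition wfree :: "var \<Rightarrow> R \<Rightarrow> bool" where
  "wfree w r \<longleftrightarrow> (\<forall>\<mu>\<in>Poly_Mapping.keys r. Poly_Mapping.lookup \<mu> w = 0)"

lemma wfree_add: "wfree w a \<Longrightarrow> wfree w b \<Longrightarrow> wfree w (a + b)"
  unfolding wfree_def using keys_add[of a b] by auto

lemma wfree_mult: "wfree w a \<Longrightarrow> wfree w b \<Longrightarrow> wfree w (a * b)"
  unfolding wfree_def
proof
  fix \<mu> assume h: "\<forall>\<mu>\<in>Poly_Mapping.keys a. Poly_Mapping.lookup \<mu> w = 0" "\<forall>\<mu>\<in>Poly_Mapping.keys b. Poly_Mapping.lookup \<mu> w = 0"
    and m: "\<mu> \<in> Poly_Mapping.keys (a * b)"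
  obtain x y where "x \<in> Poly_Mapping.keys a" "y \<in> Poly_Mapping.keys b" "\<mu> = x + y"
    using keys_mult[of a b] m by blast
  then show "Poly_Mapping.lookup \<mu> w = 0" using h by (simp add: lookup_add)
qed

lemma wfree_zero: "wfree w 0" unfolding wfree_def by simp

lemma wfree_single0: "wfree w (Poly_Mapping.single 0 c)" unfolding wfree_def by simp

lemma wfree_Const: "wfree w (Const c)" unfolding Const_def by (rule wfree_single0)

lemma wfree_Var: "v \<noteq> w \<Longrightarrow> wfree w (Var v)"
  unfolding wfree_def Var_def by (auto simp: lookup_single)

lemma wfree_uminus: "wfree w a \<Longrightarrow> wfree w (- a)"
  unfolding wfree_def by simp

lemma wfree_diff: "wfree w a \<Longrightarrow> wfree w b \<Longrightarrow> wfree w (a - b)"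
  unfolding wfree_def using keys_diff[of a b] by auto

context
  fixes u w :: var and a :: complex
  assumes uw: "u \<noteq> w"
begin

definition "Lf = Const a * Var u - Var w"

definition "divM f \<longleftrightarrow> (\<exists>q r. f = Lf * q + r \<and> wfree w r)"

lemma divM_add: "divM f \<Longrightarrow> divM g \<Longrightarrow> divM (f + g)"
proof -
  assume "divM f" "divM g"
  then obtain q1 r1 q2 r2 where h: "f = Lf * q1 + r1" "wfree w r1" "g = Lf * q2 + r2" "wfree w r2"
    unfolding divM_def by blast
  then have "f + g = Lf * (q1 + q2) + (r1 + r2)" by (simp add: algebra_simps)
  moreover have "wfree w (r1 + r2)" using h by (simp add: wfree_add)
  ultimately show ?thesis unfolding divM_def by blast
qed

lemma divM_Var: "divM f \<Longrightarrow> divM (Var v * f)"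
proof -
  assume "divM f"
  then obtain q r where h: "f = Lf * q + r" "wfree w r" unfolding divM_def by blast
  show ?thesis
  proof (cases "v = w")
    case False
    have "Var v * f = Lf * (Var v * q) + Var v * r" unfolding h by (simp add: algebra_simps)
    moreover have "wfree w (Var v * r)" using h False by (simp add: wfree_mult wfree_Var)
    ultimately show ?thesis unfolding divM_def by blast
  next
    case True
    have "Var v * f = Lf * (Var w * q - r) + Const a * Var u * r"
      unfolding h True Lf_def by (simp add: algebra_simps)
    moreover have "wfree w (Const a * Var u * r)" using h uw by (simp add: wfree_mult wfree_Var wfree_Const)
    ultimately show ?thesis unfolding divM_def by blast
  qed
qed

lemma divM_all: "divM f"
proof (induction f rule: poly_induct)
  case (1 \<mu> c)
  show ?case
  proof (induction rule: mono_induct)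
    case (1 c)
    have "Poly_Mapping.single 0 c = Lf * 0 + Poly_Mapping.single 0 c" by simp
    then show ?case unfolding divM_def using wfree_single0 by blast
  next
    case (2 \<mu> v c)
    then show ?case using divM_Var[of "Poly_Mapping.single \<mu> c" v] by (simp add: Var_mult_single)
  qed
next
  case 2
  have "(0::R) = Lf * 0 + 0" by simp
  then show ?case unfolding divM_def using wfree_zero by blast
next
  case (3 f g) then show ?case by (rule divM_add)
qed

lemma Lf_unique: "wfree w (Lf * q) \<Longrightarrow> q = 0"
proof (rule ccontr)
  assume wf: "wfree w (Lf * q)" and q0: "q \<noteq> 0"
  define D where "D = (\<lambda>\<mu>. Poly_Mapping.lookup \<mu> w) ` Poly_Mapping.keys q"
  have fD: "finite D" "D \<noteq> {}" unfolding D_def using q0 by auto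
  define d where "d = Max D"
  obtain \<mu>0 where m0: "\<mu>0 \<in> Poly_Mapping.keys q" "Poly_Mapping.lookup \<mu>0 w = d"
    using Max_in[OF fD] unfolding d_def D_def by auto
  have dmax: "Poly_Mapping.lookup \<mu> w \<le> d" if "\<mu> \<in> Poly_Mapping.keys q" for \<mu>
    unfolding d_def D_def using fD that by (simp add: D_def)
  define \<rho> where "\<rho> = Poly_Mapping.single w 1 + \<mu>0"
  have l1: "Poly_Mapping.lookup (Var w * q) \<rho> = Poly_Mapping.lookup q \<mu>0"
    unfolding Var_def \<rho>_def by (simp add: single_mult_lookup)
  have l2: "Poly_Mapping.lookup (Poly_Mapping.single (Poly_Mapping.single u 1) a * q) \<rho> = 0"
  proof (cases "\<exists>k'. \<rho> = Poly_Mapping.single u 1 + k'")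
    case True
    then obtain k' where k': "\<rho> = Poly_Mapping.single u 1 + k'" by blast
    have "Poly_Mapping.lookup k' w = d + 1"
      using arg_cong[OF k', of "\<lambda>x. Poly_Mapping.lookup x w"] m0 uw
      unfolding \<rho>_def by (simp add: lookup_add lookup_single)
    then have "k' \<notin> Poly_Mapping.keys q" using dmax by fastforce
    then show ?thesis unfolding k' by (simp add: single_mult_lookup in_keys_iff)
  next
    case False
    then show ?thesis by (intro single_mult_lookup0) blast
  qed
  have "Const a * Var u = Poly_Mapping.single (Poly_Mapping.single u 1) a"
    unfolding Const_def Var_def by (simp add: mult_single)
  then have "Poly_Mapping.lookup (Lf * q) \<rho> = - Poly_Mapping.lookup q \<mu>0"
    unfolding Lf_def using l1 l2 by (simp add: left_diff_distrib lookup_minus)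
  then have "\<rho> \<in> Poly_Mapping.keys (Lf * q)" using m0 by (simp add: in_keys_iff)
  moreover have "Poly_Mapping.lookup \<rho> w \<noteq> 0" unfolding \<rho>_def by (simp add: lookup_add)
  moreover have "\<forall>\<mu>\<in>Poly_Mapping.keys (Lf * q). Poly_Mapping.lookup \<mu> w = 0" using wf unfolding wfree_def .
  ultimately show False by auto
qed

lemma Lf_coprime:
  assumes V: "wfree w V" "V \<noteq> 0" and d: "Lf dvd V * g"
  shows "Lf dvd g"
proof -
  obtain q r where g: "g = Lf * q + r" "wfree w r" using divM_all[of g] unfolding divM_def by blast
  have "Lf dvd V * g - Lf * (V * q)" using d by simp
  moreover have "V * g - Lf * (V * q) = V * r" unfolding g by (simp add: algebra_simps)
  ultimately obtain t where t: "V * r = Lf * t" by (auto elim: dvdE)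
  have "wfree w (V * r)" using V g by (simp add: wfree_mult)
  then have "t = 0" unfolding t by (rule Lf_unique)
  then have "V * r = 0" using t by simp
  then have "r = 0" using V by simp
  then show ?thesis using g by simp
qed

end

lemma Vform_wfree: "w = X0 \<or> w = X1 \<Longrightarrow> wfree w (Vform B)"
  by (cases B) (auto intro!: wfree_diff wfree_mult wfree_Const wfree_Var)

lemma Vprod_wfree: "w = X0 \<or> w = X1 \<Longrightarrow> wfree w (prod_list (map Vform Bs))"
proof (induction Bs)
  case Nil then show ?case using wfree_single0[of w 1] by simp
next
  case (Cons b Bs) then show ?case by (simp add: wfree_mult Vform_wfree)
qed

lemma single1_inj: "Poly_Mapping.single v (1::nat) = Poly_Mapping.single v' 1 \<Longrightarrow> v = v'"
  by (metis lookup_single_eq lookup_single_not_eq zero_neq_one)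
lemma X: "v \<noteq> v' \<Longrightarrow> Poly_Mapping.single v (1::nat) \<noteq> Poly_Mapping.single v' 1" using single1_inj by metis
lemma Var_lookup: "Poly_Mapping.lookup (Var v) (Poly_Mapping.single v' 1) = (if v = v' then 1 else 0)"
proof (cases "v = v'")
  case False
  then have "Poly_Mapping.single v (1::nat) \<noteq> Poly_Mapping.single v' 1" by (rule X)
  then show ?thesis unfolding Var_def using False by (simp only: if_False) (rule lookup_single_not_eq)
qed (simp add: Var_def)

lemma CVar_lookup: "Poly_Mapping.lookup (Const a * Var v) (Poly_Mapping.single v' 1) = (if v = v' then a else 0)"
proof -
  have "Const a * Var v = Poly_Mapping.single (Poly_Mapping.single v 1) a"
    unfolding Const_def Var_def by (simp add: mult_single)
  show ?thesis
  proof (cases "v = v'")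
    case False
    then have "Poly_Mapping.single v (1::nat) \<noteq> Poly_Mapping.single v' 1" by (rule X)
    then show ?thesis unfolding \<open>Const a * Var v = _\<close> using False by (simp only: if_False) (rule lookup_single_not_eq)
  next
    case True
    show ?thesis unfolding \<open>Const a * Var v = _\<close> using True by simp
  qed
qed

lemma Hform_nz: "Hform A \<noteq> 0"
proof (cases A)
  case None
  then show ?thesis using Var_lookup[of X0 X0] by auto
next
  case (Some a)
  have "Poly_Mapping.lookup (Hform A) (Poly_Mapping.single X1 1) = -1"
    using Some CVar_lookup[of a X0 X1] Var_lookup[of X1 X1] by (simp add: lookup_minus)
  then show ?thesis by auto
qed

lemma Vform_nz: "Vform B \<noteq> 0"
proof (cases B)
  case None
  then show ?thesis using Var_lookup[of Y0 Y0] by auto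
next
  case (Some a)
  have "Poly_Mapping.lookup (Vform B) (Poly_Mapping.single Y1 1) = -1"
    using Some CVar_lookup[of a Y0 Y1] Var_lookup[of Y1 Y1] by (simp add: lookup_minus)
  then show ?thesis by auto
qed

lemma Hprod_nz: "prod_list (map Hform As) \<noteq> 0"
  by (induction As) (simp_all add: Hform_nz)

lemma Vprod_nz: "prod_list (map Vform Bs) \<noteq> 0"
  by (induction Bs) (simp_all add: Vform_nz)

lemma Hform_coprime:
  assumes V: "wfree X0 V" "wfree X1 V" "V \<noteq> 0" and d: "Hform A dvd V * g"
  shows "Hform A dvd g"
proof (cases A)
  case (Some a)
  have "Hform A = Lf X0 X1 a" using Some by (simp add: Lf_def)
  then show ?thesis using Lf_coprime[of X0 X1 V a g] V d by simp
next
  case None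
  have "Hform A = - Lf X1 X0 0" using None by (simp add: Lf_def Const_zero)
  then show ?thesis using Lf_coprime[of X1 X0 V 0 g] V d by simp
qed

lemma Hprod_coprime:
  assumes V: "wfree X0 V" "wfree X1 V" "V \<noteq> 0"
  shows "prod_list (map Hform As) dvd V * g \<Longrightarrow> prod_list (map Hform As) dvd g"
proof (induction As arbitrary: g)
  case Nil then show ?case by simp
next
  case (Cons A As)
  have "Hform A dvd V * g" using Cons.prems by (simp add: dvd_mult_left)
  then have "Hform A dvd g" by (rule Hform_coprime[OF V])
  then obtain g1 where g1: "g = Hform A * g1" by (auto elim: dvdE)
  obtain t where t: "V * g = Hform A * prod_list (map Hform As) * t" using Cons.prems by (auto elim: dvdE)
  have "Hform A * (V * g1) = Hform A * (prod_list (map Hform As) * t)"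
    using t unfolding g1 by (simp add: ac_simps)
  then have "V * g1 = prod_list (map Hform As) * t" using Hform_nz by simp
  then have "prod_list (map Hform As) dvd V * g1" by simp
  then have "prod_list (map Hform As) dvd g1" by (rule Cons.IH)
  then show ?case unfolding g1 by simp
qed

definition sc :: "complex \<Rightarrow> R \<Rightarrow> R" where "sc c x = Const c * x"

interpretation vsR: vector_space sc
  by unfold_locales (simp_all add: sc_def Const_add Const_mult Const_one algebra_simps)

definition degx :: "(var \<Rightarrow>\<^sub>0 nat) \<Rightarrow> nat" where
  "degx \<mu> = Poly_Mapping.lookup \<mu> X0 + Poly_Mapping.lookup \<mu> X1"
definition degy :: "(var \<Rightarrow>\<^sub>0 nat) \<Rightarrow> nat" where
  "degy \<mu> = Poly_Mapping.lookup \<mu> Y0 + Poly_Mapping.lookup \<mu> Y1"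

lemma degx_add: "degx (a + b) = degx a + degx b" unfolding degx_def by (simp add: lookup_add)
lemma degy_add: "degy (a + b) = degy a + degy b" unfolding degy_def by (simp add: lookup_add)

lemma deg_zero: "degx \<kappa> = 0 \<Longrightarrow> degy \<kappa> = 0 \<Longrightarrow> \<kappa> = 0"
  unfolding degx_def degy_def by (intro poly_mapping_eqI) (case_tac k; simp)

definition bihom :: "nat \<Rightarrow> nat \<Rightarrow> R \<Rightarrow> bool" where
  "bihom d e f \<longleftrightarrow> (\<forall>\<mu>\<in>Poly_Mapping.keys f. degx \<mu> = d \<and> degy \<mu> = e)"

lemma bihom_mult: "bihom d e f \<Longrightarrow> bihom d' e' g \<Longrightarrow> bihom (d + d') (e + e') (f * g)"
  unfolding bihom_def
proof
  fix \<mu> assume h: "\<forall>\<mu>\<in>Poly_Mapping.keys f. degx \<mu> = d \<and> degy \<mu> = e" "\<forall>\<mu>\<in>Poly_Mapping.keys g. degx \<mu> = d' \<and> degy \<mu> = e'"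
    and m: "\<mu> \<in> Poly_Mapping.keys (f * g)"
  obtain x y where "x \<in> Poly_Mapping.keys f" "y \<in> Poly_Mapping.keys g" "\<mu> = x + y"
    using keys_mult[of f g] m by blast
  then show "degx \<mu> = d + d' \<and> degy \<mu> = e + e'" using h by (simp add: degx_add degy_add)
qed

lemma bihom_one: "bihom 0 0 1"
  unfolding bihom_def degx_def degy_def by simp

lemma bihom_diff: "bihom d e f \<Longrightarrow> bihom d e g \<Longrightarrow> bihom d e (f - g)"
  unfolding bihom_def using keys_diff[of f g] by blast

lemma CVar_eq: "Const a * Var v = Poly_Mapping.single (Poly_Mapping.single v 1) a"
  unfolding Const_def Var_def by (simp add: mult_single)

lemma bihom_single: "degx \<mu> = d \<Longrightarrow> degy \<mu> = e \<Longrightarrow> bihom d e (Poly_Mapping.single \<mu> a)"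
  unfolding bihom_def by simp

lemma bihom_Hform: "bihom 1 0 (Hform A)"
proof (cases A)
  case None
  have "bihom 1 0 (Var X0)" unfolding Var_def
    by (rule bihom_single) (simp_all add: degx_def degy_def lookup_single when_def)
  then show ?thesis using None by simp
next
  case (Some a)
  have "bihom 1 0 (Const a * Var X0)" unfolding CVar_eq
    by (rule bihom_single) (simp_all add: degx_def degy_def lookup_single when_def)
  moreover have "bihom 1 0 (Var X1)" unfolding Var_def
    by (rule bihom_single) (simp_all add: degx_def degy_def lookup_single when_def)
  ultimately show ?thesis using Some by (simp add: bihom_diff)
qed

lemma bihom_Vform: "bihom 0 1 (Vform B)"
proof (cases B)
  case None
  have "bihom 0 1 (Var Y0)" unfolding Var_def
    by (rule bihom_single) (simp_all add: degx_def degy_def lookup_single when_def)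
  then show ?thesis using None by simp
next
  case (Some a)
  have "bihom 0 1 (Const a * Var Y0)" unfolding CVar_eq
    by (rule bihom_single) (simp_all add: degx_def degy_def lookup_single when_def)
  moreover have "bihom 0 1 (Var Y1)" unfolding Var_def
    by (rule bihom_single) (simp_all add: degx_def degy_def lookup_single when_def)
  ultimately show ?thesis using Some by (simp add: bihom_diff)
qed

lemma bihom_Hprod: "bihom (length As) 0 (prod_list (map Hform As))"
proof (induction As)
  case Nil then show ?case using bihom_one by simp
next
  case (Cons A As) then show ?case using bihom_mult[OF bihom_Hform[of A] Cons.IH] by simp
qed

lemma bihom_Vprod: "bihom 0 (length Bs) (prod_list (map Vform Bs))"
proof (induction Bs)
  case Nil then show ?case using bihom_one by simp
next
  case (Cons B Bs) then show ?case using bihom_mult[OF bihom_Vform[of B] Cons.IH] by simp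
qed

lemma bihom_Hset: "finite Hs \<Longrightarrow> bihom (card Hs) 0 (\<Prod>A\<in>Hs. Hform A)"
proof (induction Hs rule: finite_induct)
  case empty then show ?case using bihom_one by simp
next
  case (insert A F) then show ?case using bihom_mult[OF bihom_Hform[of A] insert.IH] by simp
qed

lemma bihom_Vset: "finite Vs \<Longrightarrow> bihom 0 (card Vs) (\<Prod>B\<in>Vs. Vform B)"
proof (induction Vs rule: finite_induct)
  case empty then show ?case using bihom_one by simp
next
  case (insert B F) then show ?case using bihom_mult[OF bihom_Vform[of B] insert.IH] by simp
qed

context
  fixes C :: "nat set" and m :: "nat \<Rightarrow> R" and \<alpha> \<beta> :: "nat \<Rightarrow> nat"
  assumes fC: "finite C"
    and mnz: "\<And>i. i \<in> C \<Longrightarrow> m i \<noteq> 0"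
    and mbi: "\<And>i. i \<in> C \<Longrightarrow> bihom (\<alpha> i) (\<beta> i) (m i)"
    and mono: "\<And>i j. i \<in> C \<Longrightarrow> j \<in> C \<Longrightarrow> i < j \<Longrightarrow> \<alpha> i < \<alpha> j \<and> \<beta> j < \<beta> i"
begin

definition "mu i = (SOME \<mu>. \<mu> \<in> Poly_Mapping.keys (m i))"

lemma mu_in: "i \<in> C \<Longrightarrow> mu i \<in> Poly_Mapping.keys (m i)"
  unfolding mu_def using mnz[of i] by (metis ex_in_conv keys_eq_empty someI_ex)

lemma mu_deg: "i \<in> C \<Longrightarrow> degx (mu i) = \<alpha> i \<and> degy (mu i) = \<beta> i"
  using mu_in mbi unfolding bihom_def by blast

lemma deg_eq_same: "i \<in> C \<Longrightarrow> j \<in> C \<Longrightarrow> \<alpha> i \<le> \<alpha> j \<Longrightarrow> \<beta> i \<le> \<beta> j \<Longrightarrow> i = j"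
  using mono by (metis leD linorder_neqE_nat)

lemma mu_notin: "i \<in> C \<Longrightarrow> j \<in> C \<Longrightarrow> i \<noteq> j \<Longrightarrow> mu j \<notin> Poly_Mapping.keys (m i)"
proof
  assume h: "i \<in> C" "j \<in> C" "i \<noteq> j" "mu j \<in> Poly_Mapping.keys (m i)"
  then have "degx (mu j) = \<alpha> i" "degy (mu j) = \<beta> i" using mbi unfolding bihom_def by auto
  then show False using mu_deg[OF h(2)] deg_eq_same[OF h(1,2)] h(3) by simp
qed

lemma mu_inj: "inj_on mu C"
proof (rule inj_onI)
  fix i j assume "i \<in> C" "j \<in> C" "mu i = mu j"
  then show "i = j" using mu_in mu_notin by metis
qed

definition "AbvC (f::R) \<longleftrightarrow> (\<forall>\<sigma>\<in>Poly_Mapping.keys f. \<exists>i\<in>C. \<alpha> i \<le> degx \<sigma> \<and> \<beta> i \<le> degy \<sigma>)"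

lemma AbvC_ideal: "is_ideal {f. AbvC f}"
  unfolding is_ideal_def
proof (intro conjI ballI allI)
  show "0 \<in> {f. AbvC f}" unfolding AbvC_def by simp
next
  fix a b assume "a \<in> {f. AbvC f}" "b \<in> {f. AbvC f}"
  then show "a + b \<in> {f. AbvC f}" unfolding AbvC_def using keys_add[of a b] by auto
next
  fix a c assume a: "a \<in> {f. AbvC f}"
  show "c * a \<in> {f. AbvC f}" unfolding AbvC_def mem_Collect_eq
  proof
    fix \<sigma> assume "\<sigma> \<in> Poly_Mapping.keys (c * a)"
    then obtain x y where xy: "x \<in> Poly_Mapping.keys c" "y \<in> Poly_Mapping.keys a" "\<sigma> = x + y"
      using keys_mult[of c a] by blast
    then obtain i where i: "i \<in> C" "\<alpha> i \<le> degx y" "\<beta> i \<le> degy y" using a unfolding AbvC_def by blast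
    have "\<alpha> i \<le> degx \<sigma> \<and> \<beta> i \<le> degy \<sigma>" using xy(3) i by (simp add: degx_add degy_add)
    then show "\<exists>i\<in>C. \<alpha> i \<le> degx \<sigma> \<and> \<beta> i \<le> degy \<sigma>" using i(1) by blast
  qed
qed

lemma ideal_AbvC: "g \<in> ideal_of (m ` C) \<Longrightarrow> AbvC g"
proof -
  assume g: "g \<in> ideal_of (m ` C)"
  have "m ` C \<subseteq> {f. AbvC f}"
  proof
    fix y assume "y \<in> m ` C"
    then obtain i where i: "i \<in> C" "y = m i" by blast
    show "y \<in> {f. AbvC f}" unfolding AbvC_def i(2) using i(1) mbi[OF i(1)] unfolding bihom_def by auto
  qed
  then show ?thesis using ideal_of_least[OF AbvC_ideal] g by blast
qed

lemma lookup_prod_AbvC: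
  assumes g: "AbvC g" and j: "j \<in> C"
  shows "Poly_Mapping.lookup (f * g) (mu j) = Poly_Mapping.lookup f 0 * Poly_Mapping.lookup g (mu j)"
proof -
  define c where "c = Poly_Mapping.lookup f 0"
  define f' where "f' = f - Poly_Mapping.single 0 c"
  have f: "f = Poly_Mapping.single 0 c + f'" unfolding f'_def by simp
  have f'0: "Poly_Mapping.lookup f' 0 = 0" unfolding f'_def c_def by (simp add: lookup_minus)
  have "Poly_Mapping.lookup (f' * g) (mu j) = 0"
  proof (rule ccontr)
    assume "Poly_Mapping.lookup (f' * g) (mu j) \<noteq> 0"
    then have "mu j \<in> Poly_Mapping.keys (f' * g)" by (simp add: in_keys_iff)
    then obtain x y where xy: "x \<in> Poly_Mapping.keys f'" "y \<in> Poly_Mapping.keys g" "mu j = x + y"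
      using keys_mult[of f' g] by blast
    then obtain i where i: "i \<in> C" "\<alpha> i \<le> degx y" "\<beta> i \<le> degy y" using g unfolding AbvC_def by blast
    have dj: "degx x + degx y = \<alpha> j" "degy x + degy y = \<beta> j"
      using mu_deg[OF j] xy(3) by (simp_all add: degx_add degy_add)
    then have "i = j" using deg_eq_same[OF i(1) j] i by simp
    then have "degx x = 0" "degy x = 0" using dj i by simp_all
    then have "x = 0" by (rule deg_zero)
    then show False using xy(1) f'0 by (simp add: in_keys_iff)
  qed
  moreover have "Poly_Mapping.lookup (Poly_Mapping.single 0 c * g) (mu j) = c * Poly_Mapping.lookup g (mu j)"
    using single_mult_lookup[of 0 c g "mu j"] by simp
  ultimately show ?thesis unfolding c_def[symmetric] by (subst f) (simp add: distrib_right lookup_add)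
qed

definition "proj (f::R) = (\<Sum>j\<in>C. Poly_Mapping.single (mu j) (Poly_Mapping.lookup f (mu j)))"

lemma proj_add: "proj (a + b) = proj a + proj b"
  unfolding proj_def by (simp add: lookup_add single_add sum.distrib)

lemma proj_zero: "proj 0 = 0" unfolding proj_def by simp

lemma proj_sum: "proj (sum h A) = (\<Sum>x\<in>A. proj (h x))"
  by (induction A rule: infinite_finite_induct) (simp_all add: proj_add proj_zero)

lemma proj_mult: "AbvC g \<Longrightarrow> proj (f * g) = sc (Poly_Mapping.lookup f 0) (proj g)"
proof -
  assume g: "AbvC g"
  have "proj (f * g) = (\<Sum>j\<in>C. Poly_Mapping.single (mu j) (Poly_Mapping.lookup f 0 * Poly_Mapping.lookup g (mu j)))"
    unfolding proj_def using lookup_prod_AbvC[OF g] by (intro sum.cong) auto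
  also have "\<dots> = sc (Poly_Mapping.lookup f 0) (proj g)"
    unfolding proj_def sc_def Const_def sum_distrib_left by (simp add: mult_single)
  finally show ?thesis .
qed

lemma proj_m: "i \<in> C \<Longrightarrow> proj (m i) = Poly_Mapping.single (mu i) (Poly_Mapping.lookup (m i) (mu i))"
proof -
  assume i: "i \<in> C"
  have "proj (m i) = (\<Sum>j\<in>C. if j = i then Poly_Mapping.single (mu i) (Poly_Mapping.lookup (m i) (mu i)) else 0)"
    unfolding proj_def using mu_notin[OF i] by (intro sum.cong) (auto simp: in_keys_iff)
  also have "\<dots> = Poly_Mapping.single (mu i) (Poly_Mapping.lookup (m i) (mu i))" using i fC by simp
  finally show ?thesis .
qed

lemma lower_bound:
  assumes fG: "finite G" and G: "ideal_of G = ideal_of (m ` C)"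
  shows "card C \<le> card G"
proof -
  define T where "T = (\<lambda>i. proj (m i)) ` C"
  have GA: "AbvC g" if "g \<in> G" for g
    using ideal_AbvC subset_ideal_of[of G] G that by blast
  have span: "T \<subseteq> vsR.span (proj ` G)"
  proof
    fix t assume "t \<in> T"
    then obtain i where i: "i \<in> C" "t = proj (m i)" unfolding T_def by blast
    have "m i \<in> ideal_of G" unfolding G using i(1) subset_ideal_of by blast
    then obtain G' f where G': "finite G'" "G' \<subseteq> G" "m i = (\<Sum>g\<in>G'. f g * g)" unfolding ideal_of_def by blast
    have "t = (\<Sum>g\<in>G'. sc (Poly_Mapping.lookup (f g) 0) (proj g))"
      unfolding i(2) G'(3) proj_sum using G'(2) GA by (intro sum.cong refl proj_mult) auto
    also have "\<dots> \<in> vsR.span (proj ` G)"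
      using G'(2) by (intro vsR.span_sum vsR.span_scale vsR.span_base) auto
    finally show "t \<in> vsR.span (proj ` G)" .
  qed
  have coef: "Poly_Mapping.lookup (m i) (mu i) \<noteq> 0" if "i \<in> C" for i
    using mu_in[OF that] by (simp add: in_keys_iff)
  have lk: "Poly_Mapping.lookup (proj (m i)) (mu j) = (if i = j then Poly_Mapping.lookup (m i) (mu i) else 0)"
    if "i \<in> C" "j \<in> C" for i j
    using mu_inj that unfolding proj_m[OF that(1)] by (auto simp: lookup_single when_def inj_on_def)
  have injT: "inj_on (\<lambda>i. proj (m i)) C"
  proof (rule inj_onI)
    fix i j assume ij: "i \<in> C" "j \<in> C" "proj (m i) = proj (m j)"
    show "i = j"
    proof (rule ccontr)
      assume "i \<noteq> j"
      then have z: "Poly_Mapping.lookup (proj (m i)) (mu j) = 0" using lk[OF ij(1) ij(2)] by simp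
      have "Poly_Mapping.lookup (proj (m j)) (mu j) \<noteq> 0" using lk[OF ij(2) ij(2)] coef[OF ij(2)] by simp
      then show False using z unfolding ij(3) by simp
    qed
  qed
  have indep: "vsR.independent T"
    unfolding vsR.dependent_explicit
  proof
    assume "\<exists>t u. finite t \<and> t \<subseteq> T \<and> (\<Sum>v\<in>t. sc (u v) v) = 0 \<and> (\<exists>v\<in>t. u v \<noteq> 0)"
    then obtain t u v0 where tu: "finite t" "t \<subseteq> T" "(\<Sum>v\<in>t. sc (u v) v) = 0" "v0 \<in> t" "u v0 \<noteq> 0" by blast
    obtain j where j: "j \<in> C" "v0 = proj (m j)" using tu(2,4) unfolding T_def by blast
    have "Poly_Mapping.lookup (\<Sum>v\<in>t. sc (u v) v) (mu j) = (\<Sum>v\<in>t. u v * Poly_Mapping.lookup v (mu j))"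
      unfolding sc_def Const_def lookup_sum using single_mult_lookup[of 0 _ _ "mu j"] by simp
    also have "\<dots> = (\<Sum>v\<in>t. if v = v0 then u v0 * Poly_Mapping.lookup (m j) (mu j) else 0)"
    proof (intro sum.cong refl)
      fix v assume "v \<in> t"
      then obtain i where i: "i \<in> C" "v = proj (m i)" using tu(2) unfolding T_def by blast
      show "u v * Poly_Mapping.lookup v (mu j) = (if v = v0 then u v0 * Poly_Mapping.lookup (m j) (mu j) else 0)"
      proof (cases "i = j")
        case True then show ?thesis using lk[OF i(1) j(1)] i j by simp
      next
        case False
        then have "v \<noteq> v0" using inj_onD[OF injT] i j by metis
        then show ?thesis using lk[OF i(1) j(1)] i False by simp
      qed
    qed
    also have "\<dots> = u v0 * Poly_Mapping.lookup (m j) (mu j)" using tu(1,4) by simp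
    finally have "u v0 * Poly_Mapping.lookup (m j) (mu j) = 0" using tu(3) by simp
    then show False using tu(5) coef[OF j(1)] by simp
  qed
  have "card T \<le> card (proj ` G)"
    using vsR.independent_span_bound[OF finite_imageI[OF fG] indep span] by blast
  also have "\<dots> \<le> card G" using fG by (rule card_image_le)
  finally show ?thesis unfolding T_def using card_image[OF injT] by simp
qed

end

lemma finish:
  fixes N :: nat and p q :: "nat \<Rightarrow> R" and c :: R and \<alpha> \<beta> :: "nat \<Rightarrow> nat" and tau :: "R list"
  assumes tau: "tau = map (\<lambda>k. c * p k * q k) [0..<N]"
    and pd: "\<And>i j. i \<le> j \<Longrightarrow> j < N \<Longrightarrow> p i dvd p j"
    and qd: "\<And>i j. i \<le> j \<Longrightarrow> j < N \<Longrightarrow> q j dvd q i"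
    and cop: "\<And>i j g. i < N \<Longrightarrow> j < N \<Longrightarrow> p i dvd q j * g \<Longrightarrow> p i dvd g"
    and c0: "c \<noteq> 0"
    and mnz: "\<And>i. Suc i < N \<Longrightarrow> c * p (Suc i) * q i \<noteq> 0"
    and mbi: "\<And>i. Suc i < N \<Longrightarrow> bihom (\<alpha> i) (\<beta> i) (c * p (Suc i) * q i)"
    and mono: "\<And>i j. Suc i < N \<Longrightarrow> Suc j < N \<Longrightarrow> i < j \<Longrightarrow> \<alpha> i < \<alpha> j \<and> \<beta> j < \<beta> i"
    and A: "A \<subseteq> set tau"
  shows "min_gens (ideal_of A \<inter> ideal_of (set tau - A)) = cuts tau A
         \<and> (cuts tau A = 0 \<longrightarrow> ideal_of A \<inter> ideal_of (set tau - A) = {0})"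
proof -
  define e where "e k = c * p k * q k" for k
  define m where "m i = c * p (Suc i) * q i" for i
  define S where "S = {k. k < N \<and> e k \<in> A}"
  have settau: "set tau = e ` {0..<N}" unfolding tau e_def by auto
  have AS: "A = e ` S" unfolding S_def using A settau by auto
  have BS: "set tau - A = e ` ({0..<N} - S)" unfolding S_def settau by auto
  have Ssub: "S \<subseteq> {0..<N}" unfolding S_def by auto
  define C where "C = stair_cuts S 0 N"
  have nth: "tau ! i = e i" if "i < N" for i unfolding tau e_def using that by simp
  have lt: "length tau = N" unfolding tau by simp
  have cutsC: "cuts tau A = card C"
  proof -
    have "{i. Suc i < length tau \<and> ((tau ! i \<in> A) \<noteq> (tau ! Suc i \<in> A))} = C"
      unfolding C_def stair_cuts_def S_def lt using nth by auto
    then show ?thesis unfolding cuts_def by simp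
  qed
  have I: "ideal_of A \<inter> ideal_of (set tau - A) = ideal_of (m ` C)"
  proof
    show "ideal_of A \<inter> ideal_of (set tau - A) \<subseteq> ideal_of (m ` C)"
      unfolding BS unfolding AS C_def
      by (rule stair_sub[where n=N and p=p and q=q and e=e and m=m and c=c, OF pd qd cop c0 e_def m_def Ssub])
    show "ideal_of (m ` C) \<subseteq> ideal_of A \<inter> ideal_of (set tau - A)"
      unfolding BS unfolding AS C_def
      by (rule stair_sup[where n=N and p=p and q=q and e=e and m=m and c=c, OF pd qd e_def m_def Ssub])
  qed
  have fC: "finite C" unfolding C_def stair_cuts_def by (rule finite_subset[of _ "{..<N}"]) auto
  have Cn: "Suc i < N" if "i \<in> C" for i using that unfolding C_def stair_cuts_def by auto
  have LB: "card C \<le> card G" if "finite G" "ideal_of G = ideal_of (m ` C)" for G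
  proof (rule lower_bound[of C m \<alpha> \<beta> G])
    show "finite C" by (rule fC)
    show "\<And>i. i \<in> C \<Longrightarrow> m i \<noteq> 0" unfolding m_def using mnz Cn by blast
    show "\<And>i. i \<in> C \<Longrightarrow> bihom (\<alpha> i) (\<beta> i) (m i)" unfolding m_def using mbi Cn by blast
    show "\<And>i j. i \<in> C \<Longrightarrow> j \<in> C \<Longrightarrow> i < j \<Longrightarrow> \<alpha> i < \<alpha> j \<and> \<beta> j < \<beta> i" using mono Cn by blast
  qed (use that in auto)
  have cm: "card (m ` C) = card C"
    using LB[of "m ` C"] card_image_le[OF fC, of m] fC by simp
  have "min_gens (ideal_of (m ` C)) = card C"
    unfolding min_gens_def
  proof (rule Least_equality)
    show "\<exists>G. finite G \<and> card G = card C \<and> ideal_of G = ideal_of (m ` C)"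
      using cm fC by blast
  next
    fix y assume "\<exists>G. finite G \<and> card G = y \<and> ideal_of G = ideal_of (m ` C)"
    then obtain G where "finite G" "card G = y" "ideal_of G = ideal_of (m ` C)" by blast
    then show "card C \<le> y" using LB by blast
  qed
  moreover have "card C = 0 \<Longrightarrow> ideal_of (m ` C) = {0}"
    using fC by (simp add: ideal_of_empty)
  ultimately show ?thesis unfolding I cutsC by simp
qed

lemma prefix_dvd: "j \<le> j' \<Longrightarrow> prod_list (map f (take j xs)) dvd prod_list (map (f::_ \<Rightarrow> R) (take j' xs))"
proof -
  assume "j \<le> j'"
  then have "take j' xs = take j xs @ drop j (take j' xs)"
    by (metis append_take_drop_id min.absorb1 take_take)
  then have "prod_list (map f (take j' xs)) = prod_list (map f (take j xs)) * prod_list (map f (drop j (take j' xs)))"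
    by (metis map_append prod_list.append)
  then show ?thesis by simp
qed

lemma Lambda_nz: "finite Hs \<Longrightarrow> finite Vs \<Longrightarrow> Lambda Hs Vs \<noteq> 0"
  unfolding Lambda_def by (simp add: prod_zero_iff Hform_nz Vform_nz)

lemma Lambda_bihom: "finite Hs \<Longrightarrow> finite Vs \<Longrightarrow> bihom (card Hs) (card Vs) (Lambda Hs Vs)"
  unfolding Lambda_def using bihom_mult[OF bihom_Hset[of Hs] bihom_Vset[of Vs]] by simp

context
  fixes X :: "(P1 \<times> P1) set" and As Bs :: "P1 list"
  assumes gl: "good_labelling X As Bs" and fX: "finite X" and Xne: "X \<noteq> {}"
begin

definition "al i = alpha X (As ! i)"

lemma As_props: "distinct As" "set As = fst ` X" "sorted_wrt (\<lambda>a b. alpha X a \<ge> alpha X b) As"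
  "distinct Bs" "set Bs = snd ` X"
  using gl unfolding good_labelling_def by auto

lemma h_pos: "length As > 0"
  using As_props(2) Xne by (cases As) auto

lemma v_pos: "length Bs > 0"
  using As_props(5) Xne by (cases Bs) auto

lemma al_le: "i < length As \<Longrightarrow> al i \<le> length Bs"
proof -
  assume i: "i < length As"
  have "inj_on snd {P \<in> X. fst P = As ! i}" by (auto intro: inj_onI simp: prod_eq_iff)
  then have "card {P \<in> X. fst P = As ! i} \<le> card (snd ` X)"
    by (rule card_inj_on_le) (auto simp: fX)
  also have "\<dots> = length Bs" using As_props(4,5) by (metis distinct_card)
  finally show ?thesis unfolding al_def alpha_def .
qed

lemma al_pos: "i < length As \<Longrightarrow> al i > 0"
proof -
  assume i: "i < length As"
  then have "As ! i \<in> fst ` X" using As_props(2) nth_mem by metis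
  then obtain P where "P \<in> X" "fst P = As ! i" by auto
  then have "{P \<in> X. fst P = As ! i} \<noteq> {}" by blast
  moreover have "finite {P \<in> X. fst P = As ! i}" using fX by auto
  ultimately show ?thesis unfolding al_def alpha_def by (simp add: card_gt_0_iff)
qed

lemma al_mono: "i \<le> j \<Longrightarrow> j < length As \<Longrightarrow> al j \<le> al i"
  using As_props(3) unfolding al_def
  by (metis le_neq_implies_less order_refl sorted_wrt_nth_less)

definition "D = filter (\<lambda>i. al i < al (i - 1)) [1..<length As]"

lemma D_sorted: "sorted_wrt (<) D"
  unfolding D_def by (intro sorted_wrt_filter) (simp add: sorted_wrt_upt)

lemma D_set: "d \<in> set D \<Longrightarrow> 1 \<le> d \<and> d < length As \<and> al d < al (d - 1)"
  unfolding D_def by auto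

definition "NN = length D + 2"
definition "aa k = (if k = 0 then 0 else if k \<le> length D then D ! (k - 1) else length As)"
definition "bb k = (if k = 0 then length Bs else if k \<le> length D then al (D ! (k - 1)) else 0)"

lemma aa_step: "Suc k < NN \<Longrightarrow> aa k < aa (Suc k)"
proof -
  assume k: "Suc k < NN"
  show ?thesis
  proof (cases "k = 0")
    case True
    show ?thesis
    proof (cases "D = []")
      case True then show ?thesis using \<open>k = 0\<close> h_pos unfolding aa_def by simp
    next
      case False
      then have "D ! 0 \<in> set D" by simp
      then show ?thesis using \<open>k = 0\<close> False D_set[of "D ! 0"] unfolding aa_def by (simp add: Suc_le_eq)
    qed
  next
    case False
    show ?thesis
    proof (cases "k < length D")
      case True
      then have "D ! (k - 1) < D ! k" using D_sorted False by (simp add: sorted_wrt_nth_less)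
      then show ?thesis using True False unfolding aa_def by simp
    next
      case nk: False
      then have kD: "k = length D" using k unfolding NN_def by simp
      then have "D ! (k - 1) \<in> set D" using False by simp
      then show ?thesis using D_set kD False unfolding aa_def by simp
    qed
  qed
qed

lemma bb_step: "Suc k < NN \<Longrightarrow> bb (Suc k) < bb k"
proof -
  assume k: "Suc k < NN"
  show ?thesis
  proof (cases "k = 0")
    case True
    show ?thesis
    proof (cases "D = []")
      case True then show ?thesis using \<open>k = 0\<close> v_pos unfolding bb_def by simp
    next
      case False
      then have d: "D ! 0 \<in> set D" by simp
      then have "al (D ! 0) < al (D ! 0 - 1)" using D_set by blast
      also have "\<dots> \<le> length Bs" using D_set[OF d] by (intro al_le) linarith
      finally show ?thesis using \<open>k = 0\<close> False unfolding bb_def by (simp add: Suc_le_eq)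
    qed
  next
    case False
    show ?thesis
    proof (cases "k < length D")
      case True
      have lt: "D ! (k - 1) < D ! k" using D_sorted False True by (simp add: sorted_wrt_nth_less)
      have d: "D ! k \<in> set D" using True by simp
      have "al (D ! k) < al (D ! k - 1)" using D_set[OF d] by blast
      also have "\<dots> \<le> al (D ! (k - 1))" using lt D_set[OF d] by (intro al_mono) auto
      finally show ?thesis using True False unfolding bb_def by simp
    next
      case nk: False
      then have kD: "k = length D" using k unfolding NN_def by simp
      then have d: "D ! (k - 1) \<in> set D" using False by simp
      then have "al (D ! (k - 1)) > 0" using D_set by (intro al_pos) blast
      then show ?thesis using kD False unfolding bb_def by simp
    qed
  qed
qed

lemma aa_mono: "i < j \<Longrightarrow> j < NN \<Longrightarrow> aa i < aa j"
proof (induction j)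
  case 0 then show ?case by simp
next
  case (Suc j)
  then show ?case using aa_step[of j] by (cases "i = j") auto
qed

lemma bb_mono: "i < j \<Longrightarrow> j < NN \<Longrightarrow> bb j < bb i"
proof (induction j)
  case 0 then show ?case by simp
next
  case (Suc j)
  then show ?case using bb_step[of j] by (cases "i = j") auto
qed

lemma aa_le: "aa k \<le> length As"
  unfolding aa_def using D_set nth_mem by (auto simp: less_imp_le)

lemma bb_le: "bb k \<le> length Bs"
  unfolding bb_def using D_set nth_mem al_le by auto


lemma std_eq: "std_gens X Hs Vs As Bs = map (\<lambda>k. Lambda Hs Vs * prod_list (map Hform (take (aa k) As)) * prod_list (map Vform (take (bb k) Bs))) [0..<NN]"
proof -
  have filt: "filter (\<lambda>i. alpha X (As ! i) < alpha X (As ! (i - 1))) [1..<length As] = D"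
    unfolding D_def al_def ..
  define f where "f k = Lambda Hs Vs * prod_list (map Hform (take (aa k) As)) * prod_list (map Vform (take (bb k) Bs))" for k
  define g where "g i = Lambda Hs Vs * prod_list (map Hform (take i As)) * prod_list (map Vform (take (alpha X (As ! i)) Bs))" for i
  have "std_gens X Hs Vs As Bs = Lambda Hs Vs * prod_list (map Vform Bs) # (map g D @ [Lambda Hs Vs * prod_list (map Hform As)])"
    unfolding std_gens_def Let_def filt g_def using Xne by simp
  also have "\<dots> = map f [0..<NN]"
  proof (rule nth_equalityI)
    show "length (Lambda Hs Vs * prod_list (map Vform Bs) # (map g D @ [Lambda Hs Vs * prod_list (map Hform As)])) = length (map f [0..<NN])"
      unfolding NN_def by simp
  next
    fix k assume k: "k < length (Lambda Hs Vs * prod_list (map Vform Bs) # (map g D @ [Lambda Hs Vs * prod_list (map Hform As)]))"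
    then have kN: "k < NN" unfolding NN_def by simp
    show "(Lambda Hs Vs * prod_list (map Vform Bs) # (map g D @ [Lambda Hs Vs * prod_list (map Hform As)])) ! k = map f [0..<NN] ! k"
    proof (cases k)
      case 0 then show ?thesis unfolding f_def aa_def bb_def using kN by simp
    next
      case (Suc k')
      show ?thesis
      proof (cases "k' < length D")
        case True
        then show ?thesis unfolding f_def aa_def bb_def g_def al_def using kN Suc by (simp add: nth_append)
      next
        case False
        then have "k' = length D" using kN Suc unfolding NN_def by simp
        then show ?thesis unfolding f_def aa_def bb_def using kN Suc by (simp add: nth_append)
      qed
    qed
  qed
  finally show ?thesis unfolding f_def .
qed

lemma result:
  assumes ulp: "union_lines_points X Hs Vs" and A: "A \<subseteq> set (std_gens X Hs Vs As Bs)"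
  shows "min_gens (ideal_of A \<inter> ideal_of (set (std_gens X Hs Vs As Bs) - A)) = cuts (std_gens X Hs Vs As Bs) A
         \<and> (cuts (std_gens X Hs Vs As Bs) A = 0 \<longrightarrow> ideal_of A \<inter> ideal_of (set (std_gens X Hs Vs As Bs) - A) = {0})"
proof (rule finish)
  have fin: "finite Hs" "finite Vs" using ulp unfolding union_lines_points_def by auto
  define p where "p k = prod_list (map Hform (take (aa k) As))" for k
  define q where "q k = prod_list (map Vform (take (bb k) Bs))" for k
  show "std_gens X Hs Vs As Bs = map (\<lambda>k. Lambda Hs Vs * p k * q k) [0..<NN]"
    unfolding std_eq p_def q_def ..
  show "A \<subseteq> set (std_gens X Hs Vs As Bs)" by (rule A)
  show "\<And>i j. i \<le> j \<Longrightarrow> j < NN \<Longrightarrow> p i dvd p j"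
  proof -
    fix i j assume "i \<le> j" "j < NN"
    then have "aa i \<le> aa j" using aa_mono[of i j] by (cases "i = j") auto
    then show "p i dvd p j" unfolding p_def by (rule prefix_dvd)
  qed
  show "\<And>i j. i \<le> j \<Longrightarrow> j < NN \<Longrightarrow> q j dvd q i"
  proof -
    fix i j assume "i \<le> j" "j < NN"
    then have "bb j \<le> bb i" using bb_mono[of i j] by (cases "i = j") auto
    then show "q j dvd q i" unfolding q_def by (rule prefix_dvd)
  qed
  show "\<And>i j g. i < NN \<Longrightarrow> j < NN \<Longrightarrow> p i dvd q j * g \<Longrightarrow> p i dvd g"
    unfolding p_def q_def by (rule Hprod_coprime[OF Vprod_wfree Vprod_wfree Vprod_nz]) simp_all
  show "Lambda Hs Vs \<noteq> 0" using Lambda_nz fin by blast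
  show "\<And>i. Suc i < NN \<Longrightarrow> Lambda Hs Vs * p (Suc i) * q i \<noteq> 0"
    unfolding p_def q_def using Lambda_nz[OF fin] Hprod_nz Vprod_nz by simp
  show "\<And>i. Suc i < NN \<Longrightarrow> bihom (card Hs + aa (Suc i)) (card Vs + bb i) (Lambda Hs Vs * p (Suc i) * q i)"
  proof -
    fix i
    have "bihom (card Hs + length (take (aa (Suc i)) As) + 0) (card Vs + 0 + length (take (bb i) Bs)) (Lambda Hs Vs * p (Suc i) * q i)"
      unfolding p_def q_def by (intro bihom_mult Lambda_bihom fin bihom_Hprod bihom_Vprod)
    then show "bihom (card Hs + aa (Suc i)) (card Vs + bb i) (Lambda Hs Vs * p (Suc i) * q i)"
      using aa_le[of "Suc i"] bb_le[of i] by (simp add: min_absorb2)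
  qed
  show "\<And>i j. Suc i < NN \<Longrightarrow> Suc j < NN \<Longrightarrow> i < j \<Longrightarrow> card Hs + aa (Suc i) < card Hs + aa (Suc j) \<and> card Vs + bb j < card Vs + bb i"
    using aa_mono bb_mono by simp
qed

end

theorem theorem5p7:
  fixes X :: "(P1 \<times> P1) set" and Hs Vs :: "P1 set" and As Bs :: "P1 list"
    and A :: "R set" and r :: nat
  assumes "union_lines_points X Hs Vs"
    and "ACM X"
    and "good_labelling X As Bs"
    and "A \<subseteq> set (std_gens X Hs Vs As Bs)"
    and "r = cuts (std_gens X Hs Vs As Bs) A"
  shows "min_gens (ideal_of A \<inter> ideal_of (set (std_gens X Hs Vs As Bs) - A)) = r
         \<and> (r = 0 \<longrightarrow> ideal_of A \<inter> ideal_of (set (std_gens X Hs Vs As Bs) - A) = {0})"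
proof (cases "X = {}")
  case False
  have fX: "finite X" using assms(1) unfolding union_lines_points_def by simp
  show ?thesis unfolding assms(5) by (rule result[OF assms(3) fX False assms(1) assms(4)])
next
  case True
  have fin: "finite Hs" "finite Vs" using assms(1) unfolding union_lines_points_def by auto
  have tau: "std_gens X Hs Vs As Bs = map (\<lambda>k. Lambda Hs Vs * 1 * 1) [0..<1]"
    unfolding std_gens_def Let_def using True by simp
  show ?thesis unfolding assms(5)
  proof (rule finish[where \<alpha> = "\<lambda>_. 0" and \<beta> = "\<lambda>_. 0", OF tau])
    show "Lambda Hs Vs \<noteq> 0" using Lambda_nz fin by blast
  qed (use assms(4) in auto)
qed

end
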